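(* The centroid (center of area) of the region bounded by $\Delta_u$ is $$C_2=\left(-\frac{a^2+b^2}{2a}\cos u,\,-\frac{a^2+b^2}{2b}\sin u\right),$$ which coincides with the average $\frac{1}{2\pi}\int_0^{2\pi}\Delta_u(t)\,dt$ and with the centroid of the cusp triangle $T'=P_1'P_2'P_3'$.
   Context: Let $a>b>0$ and $c>0$ with $c^2=a^2-b^2$. Let $\mathcal{E}$ be the ellipse $x^2/a^2+y^2/b^2=1$ with center $O=(0,0)$, parametrized by $P(t)=(a\cos t,b\sin t)$. Fix $u\in\mathbb{R}$ and let $M=M_u=(a\cos u,b\sin u)\in\mathcal{E}$. Let $\Delta_u(t)=(x_u(t),y_u(t))$, $t\in\mathbb{R}$, where $x_u(t)=\frac1a\big(c^2(1+\cos(t+u))\cos t-a^2\cos u\big)$ and $y_u(t)=\frac1b\big(c^2\cos t\sin(t+u)-c^2\sin t-a^2\sin u\big)$; this is the negative pedal curve of $\mathcal{E}$ with respect to $M$ (a simple closed curve). For $i=1,2,3$ let $t_i=-u/3-2\pi(i-1)/3$ and $P_i'=\Delta_u(t_i)$ (the three cusps of $\Delta_u$); $T'$ is the triangle $P_1'P_2'P_3'$. *)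

theory Defs
  imports "HOL-Analysis.Analysis"
begin

text \<open>The negative pedal curve Delta_u of the ellipse x^2/a^2+y^2/b^2=1 with
  respect to M_u = (a cos u, b sin u), where c^2 = a^2 - b^2.\<close>
definition neg_pedal :: "real \<Rightarrow> real \<Rightarrow> real \<Rightarrow> real \<Rightarrow> real \<Rightarrow> real \<times> real" where
  "neg_pedal a b c u t =
     ((c^2 * (1 + cos (t + u)) * cos t - a^2 * cos u) / a,
      (c^2 * cos t * sin (t + u) - c^2 * sin t - a^2 * sin u) / b)"

definition area_centroid :: "(real \<times> real) set \<Rightarrow> real \<times> real" where
  "area_centroid S = (1 / measure lebesgue S) *\<^sub>R integral S (\<lambda>z. z)"

definition triangle_centroid :: "real \<times> real \<Rightarrow> real \<times> real \<Rightarrow> real \<times> real \<Rightarrow> real \<times> real" where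
  "triangle_centroid p1 p2 p3 = (1/3) *\<^sub>R (p1 + p2 + p3)"

end

theory Submission
  imports Defs "HOL-Complex_Analysis.Complex_Analysis"
begin


definition P1 :: "real \<Rightarrow> real \<Rightarrow> real" where "P1 u t = cos t + cos (2*t+u)/2"
definition P2 :: "real \<Rightarrow> real \<Rightarrow> real" where "P2 u t = - sin t + sin (2*t+u)/2"

lemma pform:
  assumes "a > 0" "b > 0" "c^2 = a^2 - b^2"
  shows "neg_pedal a b c u t = (- (a^2 + b^2) / (2*a) * cos u + c^2/a * P1 u t,
                               - (a^2 + b^2) / (2*b) * sin u + c^2/b * P2 u t)"
proof -
  define v where "v = t + u"
  have u: "u = v - t" and w: "2*t+u = t + v" using v_def by auto
  have e1: "cos (2*t+u) = cos t * cos v - sin t * sin v" unfolding w by (simp add: cos_add)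
  have e2: "cos u = cos v * cos t + sin v * sin t" unfolding u by (simp add: cos_diff)
  have e3: "sin (2*t+u) = sin t * cos v + cos t * sin v" unfolding w by (simp add: sin_add)
  have e4: "sin u = sin v * cos t - cos v * sin t" unfolding u by (simp add: sin_diff)
  show ?thesis using assms
    unfolding neg_pedal_def P1_def P2_def v_def[symmetric] e1 e3
    apply (simp add: e2 e4)
    apply (simp add: field_simps)
    done
qed

lemma cos23: "cos (2*pi/3) = -1/2" and sin23: "sin (2*pi/3) = sqrt 3 / 2"
proof -
  have e: "2*pi/3 = pi - pi/3" by simp
  have "cos (2*pi/3) = cos pi * cos (pi/3) + sin pi * sin (pi/3)" by (subst e, rule cos_diff)
  then show "cos (2*pi/3) = -1/2" by (simp add: cos_60)
  have "sin (2*pi/3) = sin pi * cos (pi/3) - cos pi * sin (pi/3)" by (subst e, rule sin_diff)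
  then show "sin (2*pi/3) = sqrt 3 / 2" by (simp add: sin_60)
qed

lemma cos43: "cos (4*pi/3) = -1/2" and sin43: "sin (4*pi/3) = - sqrt 3 / 2"
proof -
  have e: "4*pi/3 = pi + pi/3" by simp
  have "cos (4*pi/3) = cos pi * cos (pi/3) - sin pi * sin (pi/3)" by (subst e, rule cos_add)
  then show "cos (4*pi/3) = -1/2" by (simp add: cos_60)
  have "sin (4*pi/3) = sin pi * cos (pi/3) + cos pi * sin (pi/3)" by (subst e, rule sin_add)
  then show "sin (4*pi/3) = - sqrt 3 / 2" by (simp add: sin_60)
qed

lemma P_rot_gen:
  assumes "cos r = -1/2" "sin r = sqrt 3/2" "cos (2*r) = -1/2" "sin (2*r) = - sqrt 3/2"
  shows "P1 u (t - r) = - P1 u t / 2 - sqrt 3 / 2 * P2 u t"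
    "P2 u (t - r) = sqrt 3 / 2 * P1 u t - P2 u t / 2"
proof -
  have w: "2*(t - r) + u = (2*t+u) - 2*r" by simp
  show "P1 u (t - r) = - P1 u t / 2 - sqrt 3 / 2 * P2 u t"
    unfolding P1_def P2_def w cos_diff[of t r] cos_diff[of "2*t+u" "2*r"] assms by (simp add: field_simps)
  show "P2 u (t - r) = sqrt 3 / 2 * P1 u t - P2 u t / 2"
    unfolding P1_def P2_def w sin_diff[of t r] sin_diff[of "2*t+u" "2*r"] assms by (simp add: field_simps)
qed

lemma P_rot:
  "P1 u (t - 2*pi/3) = - P1 u t / 2 - sqrt 3 / 2 * P2 u t"
  "P2 u (t - 2*pi/3) = sqrt 3 / 2 * P1 u t - P2 u t / 2"
  using P_rot_gen[of "2*pi/3"] cos23 sin23 cos43 sin43 by (simp_all add: mult.assoc)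

lemma P_per: "P1 u (t + 2*pi) = P1 u t" "P2 u (t + 2*pi) = P2 u t"
proof -
  have w: "2*(t + 2*pi) + u = (2*t+u) + 2*pi*2" by simp
  show "P1 u (t + 2*pi) = P1 u t" "P2 u (t + 2*pi) = P2 u t"
    unfolding P1_def P2_def w by (simp_all add: cos_add sin_add del: mult_2 mult_2_right)
qed

definition Mm :: "real \<Rightarrow> real \<Rightarrow> real \<times> real \<Rightarrow> real \<times> real" where
  "Mm al be z = (- fst z/2 - sqrt 3/2 * al/be * snd z, sqrt 3/2 * be/al * fst z - snd z/2)"

lemma p_rot:
  fixes a b c u :: real
  assumes "a > 0" "b > 0" "c^2 = a^2 - b^2"
  defines "C2 \<equiv> (- (a^2 + b^2) / (2*a) * cos u, - (a^2 + b^2) / (2*b) * sin u)"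
  assumes "c > 0"
  shows "neg_pedal a b c u (t - 2*pi/3) = C2 + Mm (c^2/a) (c^2/b) (neg_pedal a b c u t - C2)"
  using assms unfolding pform[OF assms(1-3)] Mm_def C2_def P_rot
  by (simp add: field_simps)

lemma Mm_sum:
  assumes "al \<noteq> 0" "be \<noteq> 0"
  shows "v + Mm al be v + Mm al be (Mm al be v) = 0"
proof -
  have s3: "sqrt 3 * sqrt 3 = (3::real)" by simp
  show ?thesis using assms unfolding Mm_def
    by (cases v) (simp add: field_simps s3 zero_prod_def)
qed

lemma triangle_part:
  fixes a b c u :: real
  assumes "a > b" "b > 0" "c > 0" "c^2 = a^2 - b^2"
  defines "C2 \<equiv> (- (a^2 + b^2) / (2*a) * cos u, - (a^2 + b^2) / (2*b) * sin u)"
  defines "tt \<equiv> (\<lambda>i::nat. - u / 3 - 2 * pi * (real i - 1) / 3)"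
  shows "triangle_centroid (neg_pedal a b c u (tt 1)) (neg_pedal a b c u (tt 2))
                             (neg_pedal a b c u (tt 3)) = C2"
proof -
  have a0: "a > 0" using assms by simp
  let ?p = "neg_pedal a b c u" and ?M = "Mm (c^2/a) (c^2/b)"
  have t2: "tt 2 = tt 1 - 2*pi/3" and t3: "tt 3 = tt 2 - 2*pi/3" unfolding tt_def by (simp_all add: field_simps)
  define v where "v = ?p (tt 1) - C2"
  have p1: "?p (tt 1) = C2 + v" by (simp add: v_def)
  have p2: "?p (tt 2) = C2 + ?M v" unfolding t2 p_rot[OF a0 assms(2,4,3)] by (simp add: v_def C2_def)
  have p3: "?p (tt 3) = C2 + ?M (?M v)" unfolding t3 p_rot[OF a0 assms(2,4,3)]
    using p2 by (simp add: C2_def)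
  have "v + ?M v + ?M (?M v) = 0" by (rule Mm_sum) (use assms a0 in auto)
  then have "?p (tt 1) + ?p (tt 2) + ?p (tt 3) = C2 + C2 + C2 + (v + ?M v + ?M (?M v))"
    unfolding p1 p2 p3 by (simp add: algebra_simps)
  also have "\<dots> = 3 *\<^sub>R C2" using \<open>v + ?M v + ?M (?M v) = 0\<close> by (cases C2) simp
  finally show ?thesis unfolding triangle_centroid_def by simp
qed

lemma average_part:
  fixes a b c u :: real
  assumes "a > b" "b > 0" "c > 0" "c^2 = a^2 - b^2"
  defines "C2 \<equiv> (- (a^2 + b^2) / (2*a) * cos u, - (a^2 + b^2) / (2*b) * sin u)"
  shows "(1 / (2*pi)) *\<^sub>R integral {0..2*pi} (neg_pedal a b c u) = C2"
proof -
  have a0: "a > 0" using assms by simp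
  define al where "al = c^2/a"
  define be where "be = c^2/b"
  define F where "F = (\<lambda>t. (fst C2 * t + al * (sin t + sin (2*t+u)/4),
                             snd C2 * t + be * (cos t - cos (2*t+u)/4)))"
  have pf: "neg_pedal a b c u t = (fst C2 + al * P1 u t, snd C2 + be * P2 u t)" for t
    unfolding pform[OF a0 assms(2,4)] al_def be_def C2_def by simp
  have d: "(F has_vector_derivative neg_pedal a b c u t) (at t within {0..2*pi})" for t
    unfolding pf F_def P1_def P2_def
    by (auto intro!: derivative_eq_intros has_vector_derivative_Pair simp: has_real_derivative_iff_has_vector_derivative[symmetric])
  have "(neg_pedal a b c u has_integral F (2*pi) - F 0) {0..2*pi}"
    by (rule fundamental_theorem_of_calculus) (use d in auto)
  moreover have "F (2*pi) - F 0 = (2*pi) *\<^sub>R C2"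
  proof -
    have w: "2*(2*pi) + u = u + 2*pi*2" by simp
    show ?thesis unfolding F_def w by (cases C2) (simp add: sin_add cos_add del: mult_2 mult_2_right)
  qed
  ultimately show ?thesis by (simp add: integral_unique)
qed




lemma cc_homeo:
  fixes h :: "'a::topological_space \<Rightarrow> 'b::topological_space"
  assumes ch: "continuous_on UNIV h" and ck: "continuous_on UNIV k"
    and kh: "\<And>x. k (h x) = x" and hk: "\<And>y. h (k y) = y"
  shows "h ` connected_component_set S x = connected_component_set (h ` S) (h x)"
proof
  show "h ` connected_component_set S x \<subseteq> connected_component_set (h ` S) (h x)"
  proof clarify
    fix y assume "connected_component S x y"
    then obtain T where T: "connected T" "T \<subseteq> S" "x \<in> T" "y \<in> T" unfolding connected_component_def by blast
    have "connected (h ` T)" using T(1) ch by (meson connected_continuous_image continuous_on_subset subset_UNIV)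
    then show "connected_component (h ` S) (h x) (h y)" unfolding connected_component_def
      using T by blast
  qed
  show "connected_component_set (h ` S) (h x) \<subseteq> h ` connected_component_set S x"
  proof clarify
    fix z assume "connected_component (h ` S) (h x) z"
    then obtain T where T: "connected T" "T \<subseteq> h ` S" "h x \<in> T" "z \<in> T" unfolding connected_component_def by blast
    have "connected (k ` T)" using T(1) ck by (meson connected_continuous_image continuous_on_subset subset_UNIV)
    moreover have "k ` T \<subseteq> S" using T(2) kh by auto
    moreover have "x \<in> k ` T" using T(3) kh by (metis image_eqI)
    ultimately have "connected_component S x (k z)" unfolding connected_component_def using T(4) by blast
    then show "z \<in> h ` connected_component_set S x" using hk by (metis image_eqI mem_Collect_eq)
  qed
qed

lemma bounded_homeo:
  fixes h :: "'a::euclidean_space \<Rightarrow> 'b::euclidean_space"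
  assumes ch: "continuous_on UNIV h" and "bounded A"
  shows "bounded (h ` A)"
proof -
  have "compact (closure A)" using assms(2) by (simp add: compact_closure)
  then have "compact (h ` closure A)" using ch by (meson compact_continuous_image continuous_on_subset subset_UNIV)
  then show ?thesis by (meson bounded_subset closure_subset compact_imp_bounded image_mono)
qed

lemma inside_homeo:
  fixes h :: "'a::euclidean_space \<Rightarrow> 'b::euclidean_space"
  assumes ch: "continuous_on UNIV h" and ck: "continuous_on UNIV k"
    and kh: "\<And>x. k (h x) = x" and hk: "\<And>y. h (k y) = y"
  shows "h ` inside S = inside (h ` S)"
proof -
  have m: "h x \<in> h ` S \<longleftrightarrow> x \<in> S" for x
  proof
    assume "h x \<in> h ` S" then obtain y where "y \<in> S" "h x = h y" by auto
    then have "k (h x) = k (h y)" by simp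
    then show "x \<in> S" using \<open>y \<in> S\<close> kh by simp
  qed auto
  have neg: "- (h ` S) = h ` (- S)"
  proof (rule set_eqI)
    fix y
    have "y = h (k y)" using hk by simp
    then show "y \<in> - h ` S \<longleftrightarrow> y \<in> h ` (- S)"
      using m by (metis Compl_iff imageE image_eqI)
  qed
  have e2: "k ` h ` B = B" for B using kh by (simp add: image_image)
  have b: "bounded (connected_component_set (- S) x) \<longleftrightarrow> bounded (connected_component_set (- (h ` S)) (h x))" for x
  proof -
    have e: "connected_component_set (- (h ` S)) (h x) = h ` connected_component_set (- S) x"
      unfolding neg by (rule cc_homeo[OF assms, symmetric])
    show ?thesis unfolding e
    proof
      assume "bounded (connected_component_set (- S) x)"
      then show "bounded (h ` connected_component_set (- S) x)" by (rule bounded_homeo[OF ch])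
    next
      assume "bounded (h ` connected_component_set (- S) x)"
      then have "bounded (k ` h ` connected_component_set (- S) x)" by (rule bounded_homeo[OF ck])
      then show "bounded (connected_component_set (- S) x)" by (simp only: e2)
    qed
  qed
  show ?thesis
  proof (rule set_eqI)
    fix y
    have y: "y = h (k y)" using hk by simp
    have "y \<in> h ` inside S \<longleftrightarrow> k y \<in> inside S"
    proof
      assume "y \<in> h ` inside S" then obtain x where "x \<in> inside S" "y = h x" by auto
      then show "k y \<in> inside S" using kh by simp
    next
      assume "k y \<in> inside S" then show "y \<in> h ` inside S" using y by (rule rev_image_eqI)
    qed
    also have "\<dots> \<longleftrightarrow> y \<in> inside (h ` S)"
      unfolding inside_def mem_Collect_eq using m[of "k y"] b[of "k y"] y by simp
    finally show "y \<in> h ` inside S \<longleftrightarrow> y \<in> inside (h ` S)" .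
  qed
qed




lemma lborel_translate_pre:
  fixes B :: "real set"
  assumes "B \<in> sets borel"
  shows "emeasure lborel ((\<lambda>x. x + c) -` B) = emeasure lborel B"
proof -
  have "emeasure lborel B = emeasure (distr lborel borel ((+) c)) B" by (simp add: lborel_distr_plus)
  also have "\<dots> = emeasure lborel ((+) c -` B \<inter> space lborel)"
    by (rule emeasure_distr) (use assms in auto)
  moreover have "(\<lambda>x. x + c) = (+) c" by (rule ext) (simp add: add.commute)
  ultimately show ?thesis by simp
qed

lemma shear_x: "distr lborel borel (\<lambda>z::real\<times>real. (fst z + k * snd z, snd z)) = lborel"
proof (rule measure_eqI)
  show "sets (distr lborel borel (\<lambda>z::real\<times>real. (fst z + k * snd z, snd z))) = sets lborel" by simp
  fix A :: "(real \<times> real) set" assume "A \<in> sets (distr lborel borel (\<lambda>z::real\<times>real. (fst z + k * snd z, snd z)))"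
  then have A: "A \<in> sets borel" by simp
  have meas: "(\<lambda>z::real\<times>real. (fst z + k * snd z, snd z)) \<in> borel_measurable borel"
    by (intro borel_measurable_continuous_onI continuous_intros)
  have sp: "sets (lborel \<Otimes>\<^sub>M lborel) = sets (borel :: (real\<times>real) measure)"
    by (simp only: lborel_prod sets_lborel)
  have A': "(\<lambda>z::real\<times>real. (fst z + k * snd z, snd z)) -` A \<in> sets borel"
    using measurable_sets[OF meas A] by (simp only: space_borel Int_UNIV_right)
  have "emeasure (distr lborel borel (\<lambda>z::real\<times>real. (fst z + k * snd z, snd z))) A
      = emeasure lborel ((\<lambda>z::real\<times>real. (fst z + k * snd z, snd z)) -` A)"
    using emeasure_distr[of _ lborel borel A] meas A by simp
  also have "\<dots> = emeasure (lborel \<Otimes>\<^sub>M lborel) ((\<lambda>z::real\<times>real. (fst z + k * snd z, snd z)) -` A)"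
    by (simp only: lborel_prod)
  also have "\<dots> = (\<integral>\<^sup>+y. emeasure lborel ((\<lambda>x. (x, y)) -` ((\<lambda>z::real\<times>real. (fst z + k * snd z, snd z)) -` A)) \<partial>lborel)"
    by (rule lborel_pair.emeasure_pair_measure_alt2) (simp only: sp, rule A')
  also have "\<dots> = (\<integral>\<^sup>+y. emeasure lborel ((\<lambda>x. (x, y)) -` A) \<partial>lborel)"
  proof (rule nn_integral_cong)
    fix y
    have e: "(\<lambda>x. (x, y)) -` ((\<lambda>z::real\<times>real. (fst z + k * snd z, snd z)) -` A) = (\<lambda>x. x + k*y) -` ((\<lambda>x. (x, y)) -` A)"
      by auto
    have "(\<lambda>x. (x, y)) -` A \<in> sets borel"
      using measurable_sets[OF _ A, of "\<lambda>x. (x,y)" borel] by (simp add: measurable_Pair1')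
    then show "emeasure lborel ((\<lambda>x. (x, y)) -` ((\<lambda>z::real\<times>real. (fst z + k * snd z, snd z)) -` A)) = emeasure lborel ((\<lambda>x. (x, y)) -` A)"
      unfolding e by (rule lborel_translate_pre)
  qed
  also have "\<dots> = emeasure (lborel \<Otimes>\<^sub>M lborel) A"
    by (rule lborel_pair.emeasure_pair_measure_alt2[symmetric]) (simp only: sp, rule A)
  also have "\<dots> = emeasure lborel A" by (simp only: lborel_prod)
  finally show "emeasure (distr lborel borel (\<lambda>z::real\<times>real. (fst z + k * snd z, snd z))) A = emeasure lborel A" .
qed




lemma shear_y: "distr lborel borel (\<lambda>z::real\<times>real. (fst z, snd z + k * fst z)) = lborel"
proof (rule measure_eqI)
  show "sets (distr lborel borel (\<lambda>z::real\<times>real. (fst z, snd z + k * fst z))) = sets lborel" by simp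
  fix A :: "(real \<times> real) set" assume "A \<in> sets (distr lborel borel (\<lambda>z::real\<times>real. (fst z, snd z + k * fst z)))"
  then have A: "A \<in> sets borel" by simp
  have meas: "(\<lambda>z::real\<times>real. (fst z, snd z + k * fst z)) \<in> borel_measurable borel"
    by (intro borel_measurable_continuous_onI continuous_intros)
  have sp: "sets (lborel \<Otimes>\<^sub>M lborel) = sets (borel :: (real\<times>real) measure)"
    by (simp only: lborel_prod sets_lborel)
  have A': "(\<lambda>z::real\<times>real. (fst z, snd z + k * fst z)) -` A \<in> sets borel"
    using measurable_sets[OF meas A] by (simp only: space_borel Int_UNIV_right)
  have "emeasure (distr lborel borel (\<lambda>z::real\<times>real. (fst z, snd z + k * fst z))) A
      = emeasure lborel ((\<lambda>z::real\<times>real. (fst z, snd z + k * fst z)) -` A)"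
    using emeasure_distr[of _ lborel borel A] meas A by simp
  also have "\<dots> = emeasure (lborel \<Otimes>\<^sub>M lborel) ((\<lambda>z::real\<times>real. (fst z, snd z + k * fst z)) -` A)"
    by (simp only: lborel_prod)
  also have "\<dots> = (\<integral>\<^sup>+x. emeasure lborel (Pair x -` ((\<lambda>z::real\<times>real. (fst z, snd z + k * fst z)) -` A)) \<partial>lborel)"
    by (rule lborel.emeasure_pair_measure_alt) (simp only: sp, rule A')
  also have "\<dots> = (\<integral>\<^sup>+x. emeasure lborel (Pair x -` A) \<partial>lborel)"
  proof (rule nn_integral_cong)
    fix x :: real
    have e: "Pair x -` ((\<lambda>z::real\<times>real. (fst z, snd z + k * fst z)) -` A) = (\<lambda>y. y + k*x) -` (Pair x -` A)"
      by auto
    have "Pair x -` A \<in> sets borel"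
      using measurable_sets[OF _ A, of "Pair x" borel] by (simp add: measurable_Pair2')
    then show "emeasure lborel (Pair x -` ((\<lambda>z::real\<times>real. (fst z, snd z + k * fst z)) -` A)) = emeasure lborel (Pair x -` A)"
      unfolding e by (rule lborel_translate_pre)
  qed
  also have "\<dots> = emeasure (lborel \<Otimes>\<^sub>M lborel) A"
    by (rule lborel.emeasure_pair_measure_alt[symmetric]) (simp only: sp, rule A)
  also have "\<dots> = emeasure lborel A" by (simp only: lborel_prod)
  finally show "emeasure (distr lborel borel (\<lambda>z::real\<times>real. (fst z, snd z + k * fst z))) A = emeasure lborel A" .
qed

definition linmap :: "real \<Rightarrow> real \<Rightarrow> real \<Rightarrow> real \<Rightarrow> real \<times> real \<Rightarrow> real \<times> real" where
  "linmap m11 m12 m21 m22 z = (m11 * fst z + m12 * snd z, m21 * fst z + m22 * snd z)"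

lemma linmap_cont: "continuous_on UNIV (linmap m11 m12 m21 m22)"
  unfolding linmap_def by (intro continuous_intros)

lemma linmap_meas: "linmap m11 m12 m21 m22 \<in> borel_measurable borel"
  by (rule borel_measurable_continuous_onI[OF linmap_cont])

lemma linmap_bl: "bounded_linear (linmap m11 m12 m21 m22)"
proof -
  have "linear (linmap m11 m12 m21 m22)"
    by (rule linearI) (auto simp: linmap_def algebra_simps)
  then show ?thesis by (simp add: linear_conv_bounded_linear)
qed

lemma distr_comp_lborel:
  fixes f g :: "'a::euclidean_space \<Rightarrow> 'a"
  assumes "f \<in> borel_measurable borel" "g \<in> borel_measurable borel"
    "distr lborel borel f = lborel" "distr lborel borel g = lborel"
  shows "distr lborel borel (g \<circ> f) = lborel"
proof -
  have "distr lborel borel (g \<circ> f) = distr (distr lborel borel f) borel g"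
    by (rule distr_distr[symmetric]) (use assms in auto)
  then show ?thesis using assms by simp
qed

lemma linmap_pres:
  assumes "m21 \<noteq> 0" "m11*m22 - m12*m21 = 1"
  shows "distr lborel borel (linmap m11 m12 m21 m22) = lborel"
proof -
  define a where "a = (m11 - 1)/m21"
  define c where "c = (m22 - 1)/m21"
  let ?X = "\<lambda>k. (\<lambda>z::real\<times>real. (fst z + k * snd z, snd z))"
  let ?Y = "\<lambda>k. (\<lambda>z::real\<times>real. (fst z, snd z + k * fst z))"
  have mX: "?X k \<in> borel_measurable borel" for k by (intro borel_measurable_continuous_onI continuous_intros)
  have mY: "?Y k \<in> borel_measurable borel" for k by (intro borel_measurable_continuous_onI continuous_intros)
  have m12: "m12 = (m11*m22 - 1)/m21" using assms by (simp add: field_simps)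
  have e: "linmap m11 m12 m21 m22 = ?X a \<circ> (?Y m21 \<circ> ?X c)"
    using assms(1) unfolding linmap_def a_def c_def m12
    by (intro ext) (simp add: field_simps)
  show ?thesis unfolding e
    by (intro distr_comp_lborel mX mY shear_x shear_y measurable_comp[OF mX mY, simplified comp_def] measurable_comp[OF mX mY])
qed

lemma affine_pres:
  assumes "m21 \<noteq> 0" "m11*m22 - m12*m21 = 1"
  shows "distr lborel borel (\<lambda>z. d + linmap m11 m12 m21 m22 z) = lborel"
proof -
  have "(\<lambda>z. d + linmap m11 m12 m21 m22 z) = (+) d \<circ> linmap m11 m12 m21 m22" by auto
  then show ?thesis
    by (simp only:) (rule distr_comp_lborel[OF linmap_meas _ linmap_pres[OF assms] lborel_distr_plus], simp)
qed




lemma centroid_sym: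
  fixes K :: "(real\<times>real) set" and C :: "real\<times>real"
  assumes oK: "open K" and bK: "bounded K" and CK: "C \<in> K" and m: "m21 \<noteq> 0" "m11*m22 - m12*m21 = 1"
    and inv: "\<And>z. C + linmap m11 m12 m21 m22 (z - C) \<in> K \<longleftrightarrow> z \<in> K"
    and fix0: "\<And>v. linmap m11 m12 m21 m22 v = v \<Longrightarrow> v = 0"
  shows "area_centroid K = C"
proof -
  let ?L = "linmap m11 m12 m21 m22"
  define d where "d = C - ?L C"
  have rho: "C + ?L (z - C) = d + ?L z" for z
    using linmap_bl[of m11 m12 m21 m22] unfolding d_def by (simp add: linear_diff bounded_linear.linear)
  have KB: "K \<in> sets borel" using oK by simp
  have Kfin: "emeasure lborel K < \<infinity>" using bK by (rule emeasure_bounded_finite)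
  define A where "A = measure lborel K"
  have Apos: "A > 0"
  proof -
    obtain e where e: "e > 0" "ball C e \<subseteq> K" using oK CK open_contains_ball by blast
    have "measure lborel (ball C e) \<le> A" unfolding A_def
      using e Kfin KB by (intro measure_mono_fmeasurable) (auto simp: fmeasurable_def)
    moreover have "0 < measure lborel (ball C e)" using content_ball_pos[OF e(1), of C] by simp
    ultimately show ?thesis by linarith
  qed
  have leb: "measure lebesgue K = A" unfolding A_def using KB by simp
  have si: "set_integrable lborel K (\<lambda>z. z)"
  proof -
    have "integrable lborel (\<lambda>x. indicator (closure K) x *\<^sub>R x)"
      by (rule borel_integrable_compact) (use bK in \<open>auto simp: compact_closure intro: continuous_intros\<close>)
    then have "set_integrable lborel (closure K) (\<lambda>z. z)" by (simp add: set_integrable_def)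
    then show ?thesis by (rule set_integrable_subset) (use KB closure_subset in auto)
  qed
  have int1: "integrable lborel (\<lambda>z. indicator K z *\<^sub>R z)" using si by (simp add: set_integrable_def)
  define I where "I = integral\<^sup>L lborel (\<lambda>z. indicator K z *\<^sub>R z)"
  have HK: "integral K (\<lambda>z. z) = I"
    using set_borel_integral_eq_integral(2)[OF si] unfolding I_def set_lebesgue_integral_def by simp
  have rmeas: "(\<lambda>z. d + ?L z) \<in> borel_measurable borel"
    by (intro borel_measurable_continuous_onI continuous_intros continuous_on_compose2[OF linmap_cont]) auto
  have fmeas: "(\<lambda>z::real\<times>real. indicator K z *\<^sub>R z) \<in> borel_measurable borel"
    using int1 by (simp add: borel_measurable_integrable)
  have "I = integral\<^sup>L (distr lborel borel (\<lambda>z. d + ?L z)) (\<lambda>z. indicator K z *\<^sub>R z)"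
    unfolding I_def affine_pres[OF m] ..
  also have "\<dots> = integral\<^sup>L lborel (\<lambda>z. indicator K (d + ?L z) *\<^sub>R (d + ?L z))"
    by (rule integral_distr) (use rmeas fmeas in auto)
  also have "\<dots> = integral\<^sup>L lborel (\<lambda>z. indicator K z *\<^sub>R d + ?L (indicator K z *\<^sub>R z))"
  proof (rule Bochner_Integration.integral_cong[OF refl])
    fix z
    have "indicator K (d + ?L z) = (indicator K z :: real)" using inv[of z] unfolding rho by (simp add: indicator_def)
    then show "indicator K (d + ?L z) *\<^sub>R (d + ?L z) = indicator K z *\<^sub>R d + ?L (indicator K z *\<^sub>R z)"
      using linmap_bl[of m11 m12 m21 m22] by (simp add: scaleR_add_right linear_scale bounded_linear.linear)
  qed
  also have "\<dots> = A *\<^sub>R d + ?L I"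
  proof -
    have i2: "integrable lborel (\<lambda>z. indicator K z *\<^sub>R d)"
      using KB Kfin by (intro integrable_scaleR_left) auto
    have i3: "integrable lborel (\<lambda>z. ?L (indicator K z *\<^sub>R z))"
      by (rule integrable_bounded_linear[OF linmap_bl int1])
    have i4: "integral\<^sup>L lborel (\<lambda>z. indicator K z *\<^sub>R d) = measure lborel K *\<^sub>R d"
      using KB Kfin by (subst integral_scaleR_left) auto
    show ?thesis
      using i4 integral_bounded_linear[OF linmap_bl int1, of m11 m12 m21 m22]
      by (simp add: Bochner_Integration.integral_add[OF i2 i3] A_def I_def)
  qed
  finally have eq: "I = A *\<^sub>R d + ?L I" .
  have "?L (I - A *\<^sub>R C) = I - A *\<^sub>R C"
    using eq linmap_bl[of m11 m12 m21 m22] unfolding d_def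
    by (simp add: bounded_linear.linear linear_diff linear_scale algebra_simps)
  then have "I = A *\<^sub>R C" using fix0 by fastforce
  then show ?thesis unfolding area_centroid_def leb HK using Apos by simp
qed




definition gam :: "real \<Rightarrow> real \<Rightarrow> complex" where
  "gam u t = of_real (cos (2*pi*t) + cos (2*(2*pi*t)+u)/2) + \<i> * of_real (- sin (2*pi*t) + sin (2*(2*pi*t)+u)/2)"

lemma gam_inside: "0 \<in> inside (path_image (gam u))"
proof -
  define g where "g = reversepath (circlepath 0 1)"
  have pg: "path g" and lg: "pathfinish g = pathstart g" unfolding g_def by auto
  have gt: "g t = of_real (cos (2*pi*t)) - \<i> * of_real (sin (2*pi*t))" for t
  proof -
    have "g t = exp (\<i> * of_real (2*pi - 2*pi*t))"
      unfolding g_def reversepath_def circlepath_def part_circlepath_def linepath_def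
      by (simp add: algebra_simps)
    also have "\<dots> = cis (2*pi - 2*pi*t)" by (simp add: cis_conv_exp)
    also have "\<dots> = of_real (cos (2*pi*t)) - \<i> * of_real (sin (2*pi*t))"
      by (simp add: complex_eq_iff cos_diff sin_diff)
    finally show ?thesis .
  qed
  have ngt: "norm (g t) = 1" for t
    unfolding gt by (simp add: cmod_def power2_eq_square[symmetric])
  have pgam: "path (gam u)" unfolding path_def gam_def by (intro continuous_intros) auto
  have lgam: "pathfinish (gam u) = pathstart (gam u)"
  proof -
    have w: "2*(2*pi*1)+u = u + 2*pi*2" by simp
    show ?thesis unfolding pathfinish_def pathstart_def gam_def w
      by (simp add: cos_add sin_add del: mult_2 mult_2_right)
  qed
  have diff: "norm (gam u t - g t) = 1/2" for t
  proof -
    have "gam u t - g t = cis (2*(2*pi*t)+u) / 2"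
      unfolding gam_def gt by (simp add: complex_eq_iff)
    then have "norm (gam u t - g t) = norm (cis (2*(2*pi*t)+u)) / norm (2::complex)"
      by (simp only: norm_divide)
    then show ?thesis by simp
  qed
  have near: "norm (gam u t - g t) < norm (g t - 0)" for t using diff[of t] ngt[of t] by simp
  have wn: "winding_number (gam u) 0 = winding_number g 0"
    by (rule winding_number_nearby_loops_eq[OF pg pgam lg lgam near])
  have notin: "0 \<notin> path_image (gam u)"
  proof
    assume "0 \<in> path_image (gam u)"
    then obtain t where "gam u t = 0" unfolding path_image_def by auto
    with near[of t] show False by simp
  qed
  have notin_c: "0 \<notin> path_image (circlepath 0 (1::real))" by (simp add: path_image_circlepath)
  have "winding_number g 0 = - 1"
    unfolding g_def using winding_number_reversepath[of "circlepath 0 1" 0] notin_c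
      winding_number_circlepath_centre[of 1 0] by simp
  then have "winding_number (gam u) 0 \<noteq> 0" using wn by simp
  then have "0 \<notin> outside (path_image (gam u))" using winding_number_zero_in_outside[OF pgam lgam] by blast
  then show ?thesis using notin inside_Un_outside by blast
qed




lemma L3:
  assumes "al > 0" "be > 0"
  shows "linmap (-1/2) (-(sqrt 3/2)*al/be) (sqrt 3/2*be/al) (-1/2)
          (linmap (-1/2) (-(sqrt 3/2)*al/be) (sqrt 3/2*be/al) (-1/2)
           (linmap (-1/2) (-(sqrt 3/2)*al/be) (sqrt 3/2*be/al) (-1/2) v)) = v"
proof -
  have s3: "sqrt 3 * sqrt 3 = (3::real)" by simp
  show ?thesis using assms unfolding linmap_def by (cases v) (simp add: field_simps s3)
qed

lemma Lfix:
  assumes "al > 0" "be > 0" "linmap (-1/2) (-(sqrt 3/2)*al/be) (sqrt 3/2*be/al) (-1/2) v = v"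
  shows "v = 0"
proof -
  obtain x y where v: "v = (x, y)" by (cases v)
  have s3: "sqrt 3 * sqrt 3 = (3::real)" by simp
  from assms(3) have e1: "- x/2 - (sqrt 3/2)*al/be * y = x" and e2: "sqrt 3/2*be/al * x - y/2 = y"
    unfolding linmap_def v by simp_all
  from e1 have x: "x = - (sqrt 3/3) * al/be * y" using assms(1,2) by (simp add: field_simps)
  from e2 have "sqrt 3/2*be/al * (- (sqrt 3/3) * al/be * y) = 3/2 * y" unfolding x by simp
  then have "- y / 2 = 3/2 * y" using assms(1,2) by (simp add: field_simps s3)
  then have "y = 0" by simp
  then show ?thesis using x v by (simp add: zero_prod_def)
qed

lemma Mm_linmap: "Mm al be z = linmap (-1/2) (-(sqrt 3/2)*al/be) (sqrt 3/2*be/al) (-1/2) z"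
  unfolding Mm_def linmap_def by simp

lemma image_2pi: "(\<lambda>t. 2*pi*t) ` {0..1} = {0..2*pi}"
proof
  show "(\<lambda>t. 2*pi*t) ` {0..1} \<subseteq> {0..2*pi}" by auto
  show "{0..2*pi} \<subseteq> (\<lambda>t. 2*pi*t) ` {0..1}"
  proof
    fix s assume "s \<in> {0..2*pi}"
    then have "s / (2*pi) \<in> {0..1}" "s = 2*pi*(s/(2*pi))" by (auto simp: field_simps)
    then show "s \<in> (\<lambda>t. 2*pi*t) ` {0..1}" by blast
  qed
qed

lemma area_part:
  fixes a b c u :: real
  assumes "a > b" and "b > 0" and "c > 0" and "c^2 = a^2 - b^2"
  defines "C2 \<equiv> (- (a^2 + b^2) / (2*a) * cos u, - (a^2 + b^2) / (2*b) * sin u)"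
  shows "area_centroid (inside (neg_pedal a b c u ` {0..2*pi})) = C2"
proof -
  have a0: "a > 0" using assms by simp
  define al where "al = c^2/a"
  define be where "be = c^2/b"
  have c2: "c^2 > 0" using assms(3) by simp
  have al0: "al > 0" and be0: "be > 0" unfolding al_def be_def using c2 a0 assms(2) by (auto intro: divide_pos_pos)
  define p where "p = neg_pedal a b c u"
  define \<Gamma> where "\<Gamma> = p ` {0..2*pi}"
  let ?L = "linmap (-1/2) (-(sqrt 3/2)*al/be) (sqrt 3/2*be/al) (-1/2)"
  define \<rho> where "\<rho> = (\<lambda>z. C2 + ?L (z - C2))"
  have pf: "p s = (fst C2 + al * P1 u s, snd C2 + be * P2 u s)" for s
    unfolding p_def pform[OF a0 assms(2,4)] al_def be_def C2_def by simp
  have prot: "p (t - 2*pi/3) = \<rho> (p t)" for t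
    unfolding p_def \<rho>_def C2_def p_rot[OF a0 assms(2,4,3)] al_def be_def Mm_linmap ..
  have pper: "p (t + 2*pi) = p t" for t unfolding pf P_per ..
  have pcont: "continuous_on UNIV p"
    unfolding p_def neg_pedal_def by (intro continuous_intros) (use a0 assms(2) in auto)
  have cG: "compact \<Gamma>" unfolding \<Gamma>_def
    by (rule compact_continuous_image) (auto intro: continuous_on_subset[OF pcont])
  have oK: "open (inside \<Gamma>)" by (rule open_inside) (use cG compact_imp_closed in auto)
  have bK: "bounded (inside \<Gamma>)" by (rule bounded_inside) (use cG compact_imp_bounded in auto)
  have Lcont: "continuous_on UNIV ?L" by (rule linmap_cont)
  have rcont: "continuous_on UNIV \<rho>" unfolding \<rho>_def
    by (intro continuous_intros continuous_on_compose2[OF Lcont]) auto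
  have r2cont: "continuous_on UNIV (\<rho> \<circ> \<rho>)"
    by (rule continuous_on_compose[OF rcont]) (use rcont continuous_on_subset in auto)
  have Llin: "linear ?L" using linmap_bl bounded_linear.linear by blast
  have r3: "\<rho> (\<rho> (\<rho> z)) = z" for z
    unfolding \<rho>_def using L3[OF al0 be0, of "z - C2"] by simp
  have rimg: "\<rho> ` \<Gamma> = \<Gamma>"
  proof
    show "\<rho> ` \<Gamma> \<subseteq> \<Gamma>"
    proof (rule image_subsetI)
      fix z assume "z \<in> \<Gamma>"
      then obtain t where t: "t \<in> {0..2*pi}" and zt: "z = p t" unfolding \<Gamma>_def by auto
      show "\<rho> z \<in> \<Gamma>"
      proof (cases "t \<ge> 2*pi/3")
        case True
        then have "t - 2*pi/3 \<in> {0..2*pi}" using t by auto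
        then show ?thesis unfolding zt \<Gamma>_def prot[symmetric] by blast
      next
        case False
        then have "t - 2*pi/3 + 2*pi \<in> {0..2*pi}" using t by auto
        moreover have "\<rho> (p t) = p (t - 2*pi/3 + 2*pi)" unfolding pper prot ..
        ultimately show ?thesis unfolding zt \<Gamma>_def by blast
      qed
    qed
    show "\<Gamma> \<subseteq> \<rho> ` \<Gamma>"
    proof
      fix z assume "z \<in> \<Gamma>"
      then obtain t where t: "t \<in> {0..2*pi}" and zt: "z = p t" unfolding \<Gamma>_def by auto
      have e: "p t = \<rho> (p (t + 2*pi/3))" using prot[of "t + 2*pi/3"] by simp
      show "z \<in> \<rho> ` \<Gamma>"
      proof (cases "t + 2*pi/3 \<le> 2*pi")
        case True
        then have "t + 2*pi/3 \<in> {0..2*pi}" using t by auto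
        then show ?thesis unfolding zt e \<Gamma>_def by blast
      next
        case False
        then have "t + 2*pi/3 - 2*pi \<in> {0..2*pi}" using t by auto
        moreover have "p (t + 2*pi/3) = p (t + 2*pi/3 - 2*pi)" using pper[of "t + 2*pi/3 - 2*pi"] by (simp add: add.commute)
        ultimately show ?thesis unfolding zt e \<Gamma>_def by blast
      qed
    qed
  qed
  have rK: "\<rho> ` inside \<Gamma> = inside \<Gamma>"
    using inside_homeo[OF rcont r2cont, of \<Gamma>] r3 rimg by simp
  have inv: "\<rho> z \<in> inside \<Gamma> \<longleftrightarrow> z \<in> inside \<Gamma>" for z
  proof
    assume "\<rho> z \<in> inside \<Gamma>"
    then obtain w where w: "w \<in> inside \<Gamma>" "\<rho> z = \<rho> w" using rK by (metis imageE)
    then have "\<rho> (\<rho> (\<rho> z)) = \<rho> (\<rho> (\<rho> w))" by simp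
    then have "z = w" by (simp only: r3)
    then show "z \<in> inside \<Gamma>" using w by simp
  next
    assume "z \<in> inside \<Gamma>" then show "\<rho> z \<in> inside \<Gamma>" using rK by blast
  qed
  define h where "h = (\<lambda>z::complex. C2 + (al * Re z, be * Im z))"
  define k where "k = (\<lambda>w::real\<times>real. of_real ((fst w - fst C2)/al) + \<i> * of_real ((snd w - snd C2)/be))"
  have hcont: "continuous_on UNIV h" unfolding h_def by (intro continuous_intros)
  have kcont: "continuous_on UNIV k" unfolding k_def by (intro continuous_intros) (use al0 be0 in auto)
  have kh: "k (h z) = z" for z unfolding h_def k_def using al0 be0 by (simp add: complex_eq_iff)
  have hk: "h (k w) = w" for w unfolding h_def k_def using al0 be0 by (cases w; cases C2) simp
  have hg: "h (gam u t) = p (2*pi*t)" for t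
    unfolding h_def gam_def pf P1_def P2_def by (cases C2) simp
  have "h ` path_image (gam u) = \<Gamma>"
  proof -
    have "h ` path_image (gam u) = (\<lambda>t. p (2*pi*t)) ` {0..1}"
      unfolding path_image_def image_image hg ..
    also have "\<dots> = p ` ((\<lambda>t. 2*pi*t) ` {0..1})" by (simp only: image_image)
    finally show ?thesis unfolding image_2pi \<Gamma>_def .
  qed
  then have "h ` inside (path_image (gam u)) = inside \<Gamma>"
    using inside_homeo[OF hcont kcont kh hk] by simp
  moreover have "h 0 = C2" unfolding h_def by (simp add: zero_prod_def)
  ultimately have CK: "C2 \<in> inside \<Gamma>" using gam_inside[of u] by (metis image_eqI)
  have "area_centroid (inside \<Gamma>) = C2"
  proof (rule centroid_sym[OF oK bK CK])
    show "sqrt 3 / 2 * be / al \<noteq> 0" using al0 be0 by simp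
    have s3: "sqrt 3 * sqrt 3 = (3::real)" by simp
    show "- 1 / 2 * (- 1 / 2) - - (sqrt 3 / 2) * al / be * (sqrt 3 / 2 * be / al) = 1"
      using al0 be0 by (simp add: field_simps s3)
    show "C2 + ?L (z - C2) \<in> inside \<Gamma> \<longleftrightarrow> z \<in> inside \<Gamma>" for z using inv[of z] unfolding \<rho>_def .
    show "?L v = v \<Longrightarrow> v = 0" for v using Lfix[OF al0 be0] by blast
  qed
  then show ?thesis unfolding \<Gamma>_def p_def .
qed



theorem proposition3p2:
  fixes a b c u :: real
  assumes "a > b" and "b > 0" and "c > 0" and "c^2 = a^2 - b^2"
  defines "C2 \<equiv> (- (a^2 + b^2) / (2*a) * cos u, - (a^2 + b^2) / (2*b) * sin u)"
  defines "tt \<equiv> (\<lambda>i::nat. - u / 3 - 2 * pi * (real i - 1) / 3)"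
  shows "area_centroid (inside (neg_pedal a b c u ` {0..2*pi})) = C2
         \<and> (1 / (2*pi)) *\<^sub>R integral {0..2*pi} (neg_pedal a b c u) = C2
         \<and> triangle_centroid (neg_pedal a b c u (tt 1)) (neg_pedal a b c u (tt 2))
                             (neg_pedal a b c u (tt 3)) = C2"
  using area_part[OF assms(1-4), of u] average_part[OF assms(1-4), of u]
    triangle_part[OF assms(1-4), of u] unfolding C2_def tt_def by blast

end
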